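(* Let $\psi\in\mathbf{\Psi}_n$. Then the dual norm of $|\!|\!|\cdot|\!|\!|_\psi$ satisfies, for all $(x^*_1,\ldots,x^*_n)\in(X^n)^*\cong(X^* )^n$, $$|\!|\!|(x^*_1,\ldots,x^*_n)|\!|\!|_{\psi} =\max_{(t_1,\ldots,t_n)\in\Omega_n}\frac{\sum_{i=1}^nt_i\|x^*_i\|}{\psi (t_1,\ldots,t_{n})}.$$
   Context: Let $(X,\|\cdot\|)$ be a normed vector space, $n\ge2$; the dual norm on $X^*$ is also denoted $\|\cdot\|$, and the dual norm of a norm on $X^n$ is denoted by the same symbol. $\Omega_n:=\{t\in\mathbb{R}^n\mid t_i\ge0,\ \sum_i t_i=1\}$, $\Omega_n^\circ:=\{t\in\Omega_n\mid t_i<1\ \forall i\}$. $\mathbf{\Psi}_n$ is the class of convex continuous $\psi:\Omega_n\to\mathbb{R}$ with (B1) $\psi(\mathbf{e}_i)=1$ for all standard unit vectors $\mathbf{e}_i$ and (B2) $\psi(t)\ge(1-t_i)\psi\big(\frac{t_1}{1-t_i},\ldots,\frac{t_{i-1}}{1-t_i},0,\frac{t_{i+1}}{1-t_i},\ldots,\frac{t_n}{1-t_i}\big)$ for all $t\in\Omega_n^\circ$, $i=1,\ldots,n$. For $\psi\in\mathbf{\Psi}_n$, $|\!|\!|x|\!|\!|_\psi:=\big(\sum_{i=1}^n\|x_i\|\big)\,\psi\big(\frac{\|x_1\|}{\sum_{i}\|x_i\|},\ldots,\frac{\|x_n\|}{\sum_{i}\|x_i\|}\big)$ for $x=(x_1,\ldots,x_n)\in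 X^n\setminus\{0\}$ and $|\!|\!|0|\!|\!|_\psi:=0$; this is a norm on $X^n$. *)

theory Defs
  imports "HOL-Analysis.Analysis"
begin

text \<open>The simplex Omega_n, indexed by a finite type 'n with CARD('n) = n.\<close>
definition Omega :: "(real ^ 'n::finite) set" where
  "Omega = {t. (\<forall>i. 0 \<le> t $ i) \<and> (\<Sum>i\<in>UNIV. t $ i) = 1}"

definition Omega_o :: "(real ^ 'n::finite) set" where
  "Omega_o = {t \<in> Omega. \<forall>i. t $ i < 1}"

definition Psi :: "((real ^ 'n::finite) \<Rightarrow> real) set" where
  "Psi = {\<psi>. convex_on Omega \<psi> \<and> continuous_on Omega \<psi>
              \<and> (\<forall>i. \<psi> (axis i 1) = 1)
              \<and> (\<forall>t\<in>Omega_o. \<forall>i.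
                    \<psi> t \<ge> (1 - t $ i) *
                      \<psi> (\<chi> j. if j = i then 0 else t $ j / (1 - t $ i)))}"

definition psi_norm :: "((real ^ 'n::finite) \<Rightarrow> real) \<Rightarrow> ('a::real_normed_vector) ^ 'n \<Rightarrow> real" where
  "psi_norm \<psi> x = (if x = 0 then 0 else
     (\<Sum>i\<in>UNIV. norm (x $ i)) *
       \<psi> (\<chi> i. norm (x $ i) / (\<Sum>j\<in>UNIV. norm (x $ j))))"

text \<open>Dual norm of psi_norm, evaluated at the functional on X^n induced by the tuple
  (x*_1,...,x*_n) of bounded linear functionals, x \<mapsto> sum_i x*_i(x_i).\<close>
definition dual_psi_norm :: "((real ^ 'n::finite) \<Rightarrow> real) \<Rightarrow> (('a::real_normed_vector) \<Rightarrow> real) ^ 'n \<Rightarrow> real" where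
  "dual_psi_norm \<psi> f = Sup {\<bar>\<Sum>i\<in>UNIV. (f $ i) (x $ i)\<bar> | x :: 'a ^ 'n. psi_norm \<psi> x \<le> 1}"

end

theory Submission
  imports Defs
begin

lemma onorm_approx:
  fixes f :: "'a::real_normed_vector \<Rightarrow> real"
  assumes bl: "bounded_linear f" and e: "e > 0" and u: "(u::'a) \<noteq> 0"
  shows "\<exists>y. norm y = 1 \<and> onorm f - e \<le> f y"
proof -
  interpret f: bounded_linear f by fact
  obtain b where "0 \<le> b" and b: "\<forall>x. norm (f x) \<le> norm x * b"
    using f.nonneg_bounded by auto
  then have "\<forall>x. norm (f x) / norm x \<le> b"
    by (clarify, case_tac "x = 0",
      simp_all add: f.zero pos_divide_le_eq mult.commute)
  then have bdd: "bdd_above (range (\<lambda>x. norm (f x) / norm x))"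
    unfolding bdd_above_def by fast
  have "onorm f - e < (SUP x. norm (f x) / norm x)"
    using e unfolding onorm_def by simp
  then obtain x where x: "onorm f - e < norm (f x) / norm x"
    using less_cSUP_iff[OF _ bdd] by blast
  show ?thesis
  proof (cases "x = 0")
    case True
    then have neg: "onorm f - e < 0" using x by simp
    define v where "v = (if f u \<ge> 0 then u /\<^sub>R norm u else - (u /\<^sub>R norm u))"
    have "norm v = 1" using u by (simp add: v_def)
    moreover have "f v \<ge> 0" using u by (auto simp: v_def f.scaleR f.neg mult_nonneg_nonpos)
    ultimately show ?thesis using neg by (intro exI[of _ v]) auto
  next
    case False
    define v where "v = (if f x \<ge> 0 then x /\<^sub>R norm x else - (x /\<^sub>R norm x))"
    have "norm v = 1" using False by (simp add: v_def)
    moreover have "f v = norm (f x) / norm x"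
      using False by (auto simp: v_def f.scaleR f.neg divide_inverse mult.commute)
    ultimately show ?thesis using x by (intro exI[of _ v]) auto
  qed
qed

lemma psi_ge:
  assumes psi: "\<psi> \<in> Psi"
  shows "\<forall>t\<in>(Omega :: (real ^ 'n::finite) set). \<forall>j. t$j \<le> \<psi> t"
proof -
  have ax: "\<And>i. \<psi> (axis i 1) = 1" and B2: "\<And>t i. t \<in> Omega_o \<Longrightarrow>
     \<psi> t \<ge> (1 - t $ i) * \<psi> (\<chi> j. if j = i then 0 else t $ j / (1 - t $ i))"
    using psi unfolding Psi_def by auto
  have main: "\<forall>t\<in>(Omega :: (real ^ 'n::finite) set). card {i. t$i \<noteq> 0} = k \<longrightarrow> (\<forall>j. t$j \<le> \<psi> t)" for k
  proof (induction k rule: less_induct)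
    case (less k)
    show ?case
    proof (intro ballI impI allI)
      fix t :: "real ^ 'n" and j
      assume t: "t \<in> Omega" and k: "card {i. t$i \<noteq> 0} = k"
      have nn: "\<And>i. 0 \<le> t$i" and s1: "(\<Sum>i\<in>UNIV. t$i) = 1" using t by (auto simp: Omega_def)
      have split: "(\<Sum>l\<in>UNIV. t$l) = t$i + (\<Sum>l\<in>UNIV-{i}. t$l)" for i
        by (simp add: sum.remove)
      have le1: "\<And>i. t$i \<le> 1"
      proof -
        fix i have "0 \<le> (\<Sum>l\<in>UNIV-{i}. t$l)" by (simp add: nn sum_nonneg)
        then show "t$i \<le> 1" using split[of i] s1 by simp
      qed
      show "t$j \<le> \<psi> t"
      proof (cases "\<exists>m. t$m = 1")
        case True
        then obtain m where m: "t$m = 1" by blast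
        have "(\<Sum>l\<in>UNIV-{m}. t$l) = 0" using split[of m] s1 m by simp
        then have z: "\<forall>l\<in>UNIV-{m}. t$l = 0"
          using sum_nonneg_eq_0_iff[of "UNIV-{m}" "\<lambda>l. t$l"] nn by simp
        have "t = axis m 1"
          using z m by (auto simp: vec_eq_iff axis_def)
        then show ?thesis using ax le1[of j] by simp
      next
        case False
        then have lt1: "\<And>i. t$i < 1" using le1 by (meson less_le)
        have "\<exists>i. i \<noteq> j \<and> t$i \<noteq> 0"
        proof (rule ccontr)
          assume "\<not> ?thesis"
          then have "\<forall>l\<in>UNIV-{j}. t$l = 0" by auto
          then have "t$j = 1" using split[of j] s1 by simp
          then show False using False by blast
        qed
        then obtain i where ij: "i \<noteq> j" and ti: "t$i \<noteq> 0" by blast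
        have ti0: "0 < t$i" "t$i < 1" using ti nn[of i] lt1[of i] by auto
        have tO: "t \<in> Omega_o" using t lt1 by (simp add: Omega_o_def)
        define t' where "t' = (\<chi> l. if l = i then 0 else t $ l / (1 - t $ i))"
        have "(\<Sum>l\<in>UNIV. t'$l) = t'$i + (\<Sum>l\<in>UNIV-{i}. t'$l)"
          by (rule sum.remove) auto
        also have "\<dots> = (\<Sum>l\<in>UNIV-{i}. t'$l)" by (simp add: t'_def)
        also have "\<dots> = (\<Sum>l\<in>UNIV-{i}. t$l / (1 - t$i))"
          by (rule sum.cong) (auto simp: t'_def)
        also have "\<dots> = (\<Sum>l\<in>UNIV-{i}. t$l) / (1 - t$i)"
          by (simp add: sum_divide_distrib)
        also have "\<dots> = 1" using split[of i] s1 ti0 by simp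
        finally have t'O: "t' \<in> Omega" using nn ti0
          by (auto simp: Omega_def t'_def)
        have sub: "{l. t'$l \<noteq> 0} = {l. t$l \<noteq> 0} - {i}"
          using ti0 by (auto simp: t'_def)
        have "card {l. t'$l \<noteq> 0} < k"
          unfolding sub k[symmetric] using ti by (intro card_Diff1_less) auto
        then have "t'$j \<le> \<psi> t'" using less t'O by blast
        then have "t$j / (1 - t$i) \<le> \<psi> t'" using ij by (simp add: t'_def)
        then have "t$j \<le> (1 - t$i) * \<psi> t'" using ti0 by (simp add: divide_le_eq mult.commute)
        also have "\<dots> \<le> \<psi> t" using B2[OF tO, of i] by (simp add: t'_def)
        finally show ?thesis .
      qed
    qed
  qed
  show ?thesis using main by blast
qed

lemma psi_pos:
  assumes psi: "\<psi> \<in> Psi" and t: "t \<in> (Omega :: (real ^ 'n::finite) set)"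
  shows "\<psi> t > 0"
proof -
  have "\<exists>j. t$j > 0"
  proof (rule ccontr)
    assume "\<not> ?thesis"
    then have "\<And>j. t$j \<le> 0" by (meson not_less)
    then have "(\<Sum>j\<in>UNIV. t$j) \<le> 0" by (simp add: sum_nonpos)
    then show False using t by (simp add: Omega_def)
  qed
  then obtain j where "t$j > 0" by blast
  then show ?thesis using psi_ge[OF psi] t by (meson less_le_trans)
qed

theorem theorem3p1:
  fixes \<psi> :: "(real ^ 'n::finite) \<Rightarrow> real"
    and f :: "(('a::real_normed_vector) \<Rightarrow> real) ^ 'n"
  assumes "CARD('n) \<ge> 2"
    and "\<psi> \<in> Psi"
    and "\<forall>i. bounded_linear (f $ i)"
  shows "\<exists>t0\<in>Omega.
           dual_psi_norm \<psi> f = (\<Sum>i\<in>UNIV. t0 $ i * onorm (f $ i)) / \<psi> t0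
         \<and> (\<forall>t\<in>Omega. (\<Sum>i\<in>UNIV. t $ i * onorm (f $ i)) / \<psi> t
                        \<le> (\<Sum>i\<in>UNIV. t0 $ i * onorm (f $ i)) / \<psi> t0)"
proof -
  note psi = assms(2)
  have bl: "\<And>i. bounded_linear (f $ i)" using assms(3) by blast
  define c where "c i = onorm (f $ i)" for i
  have c0: "\<And>i. 0 \<le> c i" unfolding c_def using bl onorm_pos_le by blast
  define g where "g t = (\<Sum>i\<in>UNIV. t $ i * c i) / \<psi> t" for t :: "real ^ 'n"
  have pos: "\<And>t. t \<in> Omega \<Longrightarrow> \<psi> t > 0" using psi_pos[OF psi] by blast
  have Oeq: "(Omega :: (real ^ 'n) set) = (\<Inter>i. {t. 0 \<le> t$i}) \<inter> {t. (\<Sum>i\<in>UNIV. t$i) = 1}"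
    by (auto simp: Omega_def)
  have cl: "closed (Omega :: (real ^ 'n) set)"
    unfolding Oeq
    by (intro closed_Int closed_INT ballI closed_Collect_le closed_Collect_eq continuous_intros)
  have bd: "bounded (Omega :: (real ^ 'n) set)"
  proof -
    have "norm t \<le> 1" if "t \<in> Omega" for t :: "real ^ 'n"
    proof -
      have "norm t \<le> (\<Sum>i\<in>UNIV. \<bar>t$i\<bar>)" by (rule norm_le_l1_cart)
      also have "\<dots> = (\<Sum>i\<in>UNIV. t$i)" using that by (simp add: Omega_def)
      also have "\<dots> = 1" using that by (simp add: Omega_def)
      finally show ?thesis .
    qed
    then show ?thesis unfolding bounded_iff by blast
  qed
  have cpt: "compact (Omega :: (real ^ 'n) set)" using cl bd by (simp add: compact_eq_bounded_closed)
  obtain i0 :: 'n where True by blast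
  have "axis i0 1 \<in> (Omega :: (real ^ 'n) set)"
    by (simp add: Omega_def axis_def)
  then have ne: "(Omega :: (real ^ 'n) set) \<noteq> {}" by blast
  have psic: "continuous_on Omega \<psi>" using psi by (simp add: Psi_def)
  have gc: "continuous_on Omega g"
    unfolding g_def
    by (intro continuous_intros psic) (use pos in force)
  obtain t0 where t0: "t0 \<in> Omega" and t0max: "\<forall>t\<in>Omega. g t \<le> g t0"
    using continuous_attains_sup[OF cpt ne gc] by blast
  define M where "M = g t0"
  have p0: "\<psi> t0 > 0" using pos t0 by blast
  have t0nn: "\<And>i. 0 \<le> t0$i" and t0s: "(\<Sum>i\<in>UNIV. t0$i) = 1" using t0 by (auto simp: Omega_def)
  have M0: "0 \<le> M" unfolding M_def g_def using p0 t0nn c0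
    by (intro divide_nonneg_pos sum_nonneg mult_nonneg_nonneg) auto
  define S where "S = {\<bar>\<Sum>i\<in>UNIV. (f $ i) (x $ i)\<bar> | x :: 'a ^ 'n. psi_norm \<psi> x \<le> 1}"
  have ub: "z \<le> M" if zS: "z \<in> S" for z
  proof -
    obtain x :: "'a ^ 'n" where z: "z = \<bar>\<Sum>i\<in>UNIV. (f $ i) (x $ i)\<bar>" and x1: "psi_norm \<psi> x \<le> 1"
      using zS unfolding S_def by blast
    show ?thesis
    proof (cases "x = 0")
      case True
      then show ?thesis using z M0 bl by (simp add: linear_simps(3))
    next
      case False
      define s where "s = (\<Sum>j\<in>UNIV. norm (x $ j))"
      obtain k where "x$k \<noteq> 0" using False by (auto simp: vec_eq_iff)
      then have "0 < norm (x$k)" by simp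
      also have "norm (x$k) \<le> s" unfolding s_def
        by (rule member_le_sum) auto
      finally have s0: "0 < s" .
      define t where "t = (\<chi> i. norm (x $ i) / s)"
      have tO: "t \<in> Omega" using s0
        by (auto simp: Omega_def t_def sum_divide_distrib[symmetric] s_def)
      have pn: "psi_norm \<psi> x = s * \<psi> t"
        using False by (simp add: psi_norm_def s_def t_def)
      have "z \<le> (\<Sum>i\<in>UNIV. \<bar>(f $ i) (x $ i)\<bar>)" unfolding z by (rule sum_abs)
      also have "\<dots> \<le> (\<Sum>i\<in>UNIV. c i * norm (x $ i))"
        by (intro sum_mono) (use onorm[OF bl] in \<open>simp add: c_def\<close>)
      also have "\<dots> = s * (\<Sum>i\<in>UNIV. t $ i * c i)"
        using s0 by (simp add: t_def sum_distrib_left mult.commute)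
      also have "\<dots> = s * \<psi> t * g t"
        using pos[OF tO] by (simp add: g_def)
      also have "\<dots> \<le> s * \<psi> t * M"
        unfolding M_def using t0max tO s0 pos[OF tO] by (intro mult_left_mono) auto
      also have "\<dots> \<le> M" using mult_right_mono[OF _ M0, of "s * \<psi> t" 1] pn x1 by simp
      finally show ?thesis .
    qed
  qed
  have "0 \<in> S" unfolding S_def
    by (rule CollectI, rule exI[of _ 0]) (simp add: psi_norm_def bl linear_simps(3))
  then have Sne: "S \<noteq> {}" by blast
  have bddS: "bdd_above S" using ub by (auto simp: bdd_above_def)
  have le: "Sup S \<le> M" using Sne ub by (rule cSup_least)
  have ge: "M \<le> Sup S"
  proof (cases "\<exists>u::'a. u \<noteq> 0")
    case False
    then have "\<And>i. c i = 0" unfolding c_def using onorm_eq_0[OF bl] bl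
      by (metis linear_simps(3))
    then have "M = 0" by (simp add: M_def g_def)
    then show ?thesis using cSup_upper[OF \<open>0 \<in> S\<close> bddS] by simp
  next
    case True
    then obtain u :: 'a where u: "u \<noteq> 0" by blast
    show ?thesis
    proof (rule field_le_epsilon)
      fix e :: real assume e: "0 < e"
      define e' where "e' = e * \<psi> t0"
      have e': "0 < e'" using e p0 by (simp add: e'_def)
      have "\<forall>i. \<exists>y. norm y = 1 \<and> c i - e' \<le> (f $ i) y"
        using onorm_approx[OF bl e' u] unfolding c_def by blast
      then obtain y where y: "\<And>i. norm (y i) = 1" "\<And>i. c i - e' \<le> (f $ i) (y i)"
        by metis
      define x where "x = (\<chi> i. (t0$i / \<psi> t0) *\<^sub>R y i)"
      have nx: "\<And>i. norm (x$i) = t0$i / \<psi> t0" using y(1) t0nn p0 by (simp add: x_def)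
      have sx: "(\<Sum>j\<in>UNIV. norm (x $ j)) = 1 / \<psi> t0"
        unfolding nx using t0s by (simp add: sum_divide_distrib[symmetric])
      have "x \<noteq> 0"
      proof
        assume "x = 0"
        then have "(\<Sum>j\<in>UNIV. norm (x $ j)) = 0" by simp
        then show False using sx p0 by simp
      qed
      moreover have "(\<chi> i. norm (x $ i) / (\<Sum>j\<in>UNIV. norm (x $ j))) = t0"
        unfolding sx nx using p0 by (simp add: vec_eq_iff sum_divide_distrib[symmetric] t0s)
      ultimately have pnx: "psi_norm \<psi> x = 1"
        unfolding psi_norm_def sx using p0 by simp
      have lin: "\<And>i. (f $ i) (x $ i) = (t0$i / \<psi> t0) * (f $ i) (y i)"
        using bl by (simp add: x_def linear_simps(5))
      have "M - e = (\<Sum>i\<in>UNIV. (t0$i / \<psi> t0) * (c i - e'))"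
        using p0 t0s
        by (simp add: M_def g_def e'_def right_diff_distrib sum_subtractf
            sum_divide_distrib[symmetric] sum_distrib_right[symmetric] field_simps
            sum_distrib_left[symmetric])
      also have "\<dots> \<le> (\<Sum>i\<in>UNIV. (f $ i) (x $ i))"
        unfolding lin using y(2) t0nn p0
        by (intro sum_mono mult_left_mono) auto
      also have "\<dots> \<le> \<bar>\<Sum>i\<in>UNIV. (f $ i) (x $ i)\<bar>" by simp
      also have "\<dots> \<le> Sup S"
        using pnx by (intro cSup_upper bddS) (auto simp: S_def)
      finally show "M \<le> Sup S + e" by simp
    qed
  qed
  have "dual_psi_norm \<psi> f = M"
    using le ge by (simp add: dual_psi_norm_def S_def[symmetric])
  then show ?thesis
    using t0 t0max unfolding M_def g_def c_def by blast
qed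

end
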